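(* If $f_N\in H_N^{\mathrm{sip}}$ converges weakly to $f\in H^{\mathrm{sbm}}$ with respect to the Hilbert space convergence $H_N^{\mathrm{sip}}\to H^{\mathrm{sbm}}$, then $f_N$ (viewed as an element of $H_N^{\mathrm{rw}}$) also converges weakly to $f$ (viewed as an element of $H^{\mathrm{bm}}$, i.e. its Lebesgue a.e. class) with respect to the Hilbert space convergence $H_N^{\mathrm{rw}}\to H^{\mathrm{bm}}$.
   Context: $\gamma>0$; $\mu_N$ gives mass $\frac1N$ to each point of $\frac1N\mathbb Z$; $\nu_{\gamma,N}=\mu_N+\sqrt2\gamma\delta_0$. $H_N^{\mathrm{rw}}=L^2(\frac1N\mathbb Z,\mu_N)$, $H^{\mathrm{bm}}=L^2(\mathbb R,dx)$, Hilbert convergence witnessed by $C^{\mathrm{rw}}=C_c^\infty(\mathbb R)$ and $\Phi_Nf=f|_{\frac1N\mathbb Z}$. $H_N^{\mathrm{sip}}=L^2(\frac1N\mathbb Z,\nu_{\gamma,N})$, $H^{\mathrm{sbm}}=L^2(\mathbb R,dx+\sqrt2\gamma\delta_0)$, Hilbert convergence witnessed by $C^{\mathrm{sip}}=\{f+\lambda\mathbf 1_{\{0\}}:f\in C_c^\infty(\mathbb R),\lambda\in\mathbb R\}$ and $\Phi_Nf=f|_{\frac1N\mathbb Z}$. In either setting: $g_N\in H_N$ converges strongly to $g\in H$ if there exist $\tilde g_M$ in the respective $C$ with $\|\tilde g_M-g\|_H\to0$ and $\lim_M\limsup_N\|\Phi_N\tilde g_M-g_N\|_{H_N}=0$; $f_N$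 converges weakly to $f$ if $\langle f_N,g_N\rangle_{H_N}\to\langle f,g\rangle_H$ for every sequence $g_N$ converging strongly to $g$. *)

theory Defs
  imports "HOL-Analysis.Analysis"
begin

text \<open>Points of the lattice (1/N)Z are indexed by k :: int, the point being k/N.  The parameter c is the mass of
  the atom at 0: c = 0 gives the random walk / Brownian motion setting,
  c = sqrt 2 * gamma the sticky (SIP / sticky BM) setting.\<close>

definition smooth_real :: "(real \<Rightarrow> real) \<Rightarrow> bool" where
  "smooth_real f \<longleftrightarrow> (\<forall>n x. ((deriv ^^ n) f) differentiable (at x))"

definition Cc_infty :: "(real \<Rightarrow> real) set" where
  "Cc_infty = {f. smooth_real f \<and> (\<exists>R. \<forall>x. \<bar>x\<bar> > R \<longrightarrow> f x = 0)}"

definition C_rw :: "(real \<Rightarrow> real) set" where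
  "C_rw = Cc_infty"

definition C_sip :: "(real \<Rightarrow> real) set" where
  "C_sip = {(\<lambda>x. f x + l * indicator {0} x) | f l. f \<in> Cc_infty}"

definition Phi :: "nat \<Rightarrow> (real \<Rightarrow> real) \<Rightarrow> int \<Rightarrow> real" where
  "Phi N f = (\<lambda>k. f (real_of_int k / real N))"

definition disc_mem :: "(int \<Rightarrow> real) \<Rightarrow> bool" where
  "disc_mem u \<longleftrightarrow> (\<lambda>k. (u k)\<^sup>2) summable_on UNIV"

definition disc_inner :: "real \<Rightarrow> nat \<Rightarrow> (int \<Rightarrow> real) \<Rightarrow> (int \<Rightarrow> real) \<Rightarrow> real" where
  "disc_inner c N u v = (\<Sum>\<^sub>\<infinity>k. u k * v k) / real N + c * u 0 * v 0"

definition disc_norm :: "real \<Rightarrow> nat \<Rightarrow> (int \<Rightarrow> real) \<Rightarrow> real" where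
  "disc_norm c N u = sqrt (disc_inner c N u u)"

definition cont_mem :: "(real \<Rightarrow> real) \<Rightarrow> bool" where
  "cont_mem f \<longleftrightarrow> f \<in> borel_measurable borel \<and> integrable lborel (\<lambda>x. (f x)\<^sup>2)"

definition cont_inner :: "real \<Rightarrow> (real \<Rightarrow> real) \<Rightarrow> (real \<Rightarrow> real) \<Rightarrow> real" where
  "cont_inner c f g = (LINT x|lborel. f x * g x) + c * f 0 * g 0"

definition cont_norm :: "real \<Rightarrow> (real \<Rightarrow> real) \<Rightarrow> real" where
  "cont_norm c f = sqrt (cont_inner c f f)"

definition strong_conv ::
  "real \<Rightarrow> (real \<Rightarrow> real) set \<Rightarrow> (nat \<Rightarrow> int \<Rightarrow> real) \<Rightarrow> (real \<Rightarrow> real) \<Rightarrow> bool" where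
  "strong_conv c C gs g \<longleftrightarrow>
     (\<forall>N\<ge>1. disc_mem (gs N)) \<and> cont_mem g \<and>
     (\<exists>gt :: nat \<Rightarrow> real \<Rightarrow> real. (\<forall>M. gt M \<in> C) \<and>
        (\<lambda>M. cont_norm c (\<lambda>x. gt M x - g x)) \<longlonglongrightarrow> 0 \<and>
        (\<lambda>M. limsup (\<lambda>N. ereal (disc_norm c N (\<lambda>k. Phi N (gt M) k - gs N k))))
           \<longlonglongrightarrow> 0)"

definition weak_conv ::
  "real \<Rightarrow> (real \<Rightarrow> real) set \<Rightarrow> (nat \<Rightarrow> int \<Rightarrow> real) \<Rightarrow> (real \<Rightarrow> real) \<Rightarrow> bool" where
  "weak_conv c C fs f \<longleftrightarrow>
     (\<forall>gs g. strong_conv c C gs g \<longrightarrow>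
        (\<lambda>N. disc_inner c N (fs N) (gs N)) \<longlonglongrightarrow> cont_inner c f g)"

end

theory Submission imports Defs begin

lemma l2_prod_summable:
  assumes "disc_mem u" "disc_mem v"
  shows "(\<lambda>k. u k * v k) summable_on UNIV"
proof -
  have s: "(\<lambda>k. (u k)\<^sup>2 + (v k)\<^sup>2) summable_on UNIV"
    using assms unfolding disc_mem_def by (intro summable_on_add)
  have "(\<lambda>k. norm (u k * v k)) summable_on UNIV"
  proof (rule summable_on_comparison_test[OF s])
    fix k
    have a: "2 * \<bar>u k\<bar> * \<bar>v k\<bar> \<le> (u k)\<^sup>2 + (v k)\<^sup>2"
      using sum_squares_bound[of "\<bar>u k\<bar>" "\<bar>v k\<bar>"] by simp
    have b: "0 \<le> \<bar>u k\<bar> * \<bar>v k\<bar>" by simp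
    have "norm (u k * v k) = \<bar>u k\<bar> * \<bar>v k\<bar>" by (simp add: abs_mult)
      then show "norm (u k * v k) \<le> (u k)\<^sup>2 + (v k)\<^sup>2" using a b by linarith
  qed simp
  then show ?thesis using summable_on_iff_abs_summable_on_real by blast
qed

lemma l2_diff:
  assumes "disc_mem u" "disc_mem v"
  shows "disc_mem (\<lambda>k. u k - v k)"
proof -
  have s: "(\<lambda>k. 2 * (u k)\<^sup>2 + 2 * (v k)\<^sup>2) summable_on UNIV"
    using assms unfolding disc_mem_def by (intro summable_on_add summable_on_cmult_right)
  show ?thesis unfolding disc_mem_def
  proof (rule summable_on_comparison_test[OF s])
    fix k
    have "0 \<le> (u k + v k)\<^sup>2" by simp
    then show "(u k - v k)\<^sup>2 \<le> 2 * (u k)\<^sup>2 + 2 * (v k)\<^sup>2"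
      by (simp add: power2_eq_square algebra_simps)
  qed simp
qed

lemma finite_supp_summable:
  fixes h :: "int \<Rightarrow> real"
  assumes "finite {k. h k \<noteq> 0}"
  shows "h summable_on UNIV"
proof -
  have "h summable_on {k. h k \<noteq> 0}" using assms by simp
  then show ?thesis
    by (rule summable_on_cong_neutral[THEN iffD1, rotated -1]) auto
qed

lemma finite_supp_disc_mem:
  assumes "finite {k. u k \<noteq> 0}"
  shows "disc_mem u"
  unfolding disc_mem_def
  by (rule finite_supp_summable) (use assms in auto)

lemma Phi_finite_supp:
  assumes "f \<in> Cc_infty" "N \<ge> 1"
  shows "finite {k. Phi N f k \<noteq> 0}"
proof -
  obtain R where R: "\<forall>x. \<bar>x\<bar> > R \<longrightarrow> f x = 0" using assms(1) unfolding Cc_infty_def by auto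
  have "{k. Phi N f k \<noteq> 0} \<subseteq> {-\<lceil>R * N\<rceil>..\<lceil>R * N\<rceil>}"
  proof
    fix k assume kk: "k \<in> {k. Phi N f k \<noteq> 0}"
    have fk: "f (real_of_int k / real N) \<noteq> 0" using kk by (simp add: Phi_def)
    have "\<bar>real_of_int k / real N\<bar> \<le> R"
    proof (rule ccontr)
      assume "\<not> \<bar>real_of_int k / real N\<bar> \<le> R"
      then have "R < \<bar>real_of_int k / real N\<bar>" by simp
      then have "f (real_of_int k / real N) = 0" using R by simp
      with fk show False by simp
    qed
    then have a1: "\<bar>real_of_int k\<bar> / real N \<le> R" by (simp add: abs_divide)
    have Npos: "real N > 0" using assms(2) by simp
    have a2: "\<bar>real_of_int k\<bar> \<le> R * real N" using a1 Npos by (simp only: pos_divide_le_eq)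
    have a3: "R * real N \<le> real_of_int \<lceil>R * real N\<rceil>" by (rule le_of_int_ceiling)
    have "real_of_int \<bar>k\<bar> \<le> real_of_int \<lceil>R * real N\<rceil>" using a2 a3 of_int_abs[of k] by linarith
    then have "\<bar>k\<bar> \<le> \<lceil>R * N\<rceil>" by (simp only: of_int_le_iff)
    then show "k \<in> {-\<lceil>R * N\<rceil>..\<lceil>R * N\<rceil>}" by auto
  qed
  then show ?thesis using finite_subset by blast
qed

lemma infsum_drop0:
  fixes h :: "int \<Rightarrow> real"
  assumes "h summable_on UNIV"
  shows "infsum (\<lambda>k. if k = 0 then 0 else h k) UNIV = infsum h UNIV - h 0"
proof -
  have s2: "(\<lambda>k::int. if k = 0 then h 0 else 0) summable_on UNIV"
    by (rule finite_supp_summable) (auto intro: finite_subset[of _ "{0}"])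
  have i2: "infsum (\<lambda>k::int. if k = 0 then h 0 else 0) UNIV = h 0"
  proof -
    have "infsum (\<lambda>k::int. if k = 0 then h 0 else 0) UNIV = infsum (\<lambda>k::int. if k = 0 then h 0 else 0) {0::int}"
      by (rule infsum_cong_neutral) auto
    then show ?thesis by simp
  qed
  have "h = (\<lambda>k. (if k = 0 then 0 else h k) + (if k = 0 then h 0 else 0))" by auto
  then have "infsum h UNIV = infsum (\<lambda>k. (if k = 0 then 0 else h k) + (if k = 0 then h 0 else 0)) UNIV"
    by simp
  also have "\<dots> = infsum (\<lambda>k. if k = 0 then 0 else h k) UNIV + h 0"
  proof -
    have s1: "(\<lambda>k. if k = 0 then 0 else h k) summable_on UNIV"
    proof -
      have "(\<lambda>k. h k + (- (if k = 0 then h 0 else 0))) summable_on UNIV"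
        using assms s2 summable_on_add summable_on_uminus by blast
      moreover have "(\<lambda>k. h k + (- (if k = 0 then h 0 else 0))) = (\<lambda>k. if k = 0 then 0 else h k)" by auto
      ultimately show ?thesis by simp
    qed
    show ?thesis using infsum_add[OF s1 s2] i2 by simp
  qed
  finally show ?thesis by simp
qed

lemma zero_Cc: "(\<lambda>x. 0) \<in> Cc_infty"
proof -
  have "(deriv ^^ n) (\<lambda>x::real. 0::real) = (\<lambda>x. 0)" for n
    by (induction n) auto
  then show ?thesis unfolding Cc_infty_def smooth_real_def by auto
qed

lemma Cc_meas:
  assumes "f \<in> Cc_infty" shows "f \<in> borel_measurable borel"
proof -
  have "f differentiable (at x)" for x
  proof -
    have "((deriv ^^ 0) f) differentiable (at x)"
      using assms unfolding Cc_infty_def smooth_real_def by blast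
    then show ?thesis by simp
  qed
  then have "continuous_on UNIV f"
    by (simp add: continuous_at_imp_continuous_on differentiable_imp_continuous_within)
  then show ?thesis by (simp add: borel_measurable_continuous_onI)
qed


lemma single0: "infsum (\<lambda>k::int. if k = 0 then a else 0) UNIV = (a::real)"
proof -
  have "infsum (\<lambda>k::int. if k = 0 then a else 0) UNIV = infsum (\<lambda>k::int. if k = 0 then a else 0) {0::int}"
    by (rule infsum_cong_neutral) auto
  then show ?thesis by simp
qed

lemma div_N_eq0: "N \<ge> 1 \<Longrightarrow> (real_of_int k / real N = 0) \<longleftrightarrow> k = 0"
  by auto

lemma sq_ge_w0:
  fixes w :: "int \<Rightarrow> real"
  assumes "disc_mem w"
  shows "infsum (\<lambda>k. w k * w k) UNIV - w 0 * w 0 \<ge> 0"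
    and "infsum (\<lambda>k. if k = 0 then 0 else w k * w k) UNIV = infsum (\<lambda>k. w k * w k) UNIV - w 0 * w 0"
proof -
  have s: "(\<lambda>k. w k * w k) summable_on UNIV" using assms unfolding disc_mem_def
    by (simp add: power2_eq_square)
  show e: "infsum (\<lambda>k. if k = 0 then 0 else w k * w k) UNIV = infsum (\<lambda>k. w k * w k) UNIV - w 0 * w 0"
    using infsum_drop0[OF s] by simp
  have "infsum (\<lambda>k. if k = 0 then 0 else w k * w k) UNIV \<ge> 0"
    by (rule infsum_nonneg) auto
  then show "infsum (\<lambda>k. w k * w k) UNIV - w 0 * w 0 \<ge> 0" using e by simp
qed

lemma disc_norm_nonneg:
  assumes "c \<ge> 0" shows "0 \<le> disc_norm c N u"
proof -
  have a: "0 \<le> infsum (\<lambda>k. u k * u k) UNIV" by (rule infsum_nonneg) simp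
  have b: "0 \<le> c * u 0 * u 0" using assms by (simp add: mult.assoc)
  have "0 \<le> disc_inner c N u u" unfolding disc_inner_def
    using a b by (intro add_nonneg_nonneg divide_nonneg_nonneg) auto
  then show ?thesis unfolding disc_norm_def by simp
qed

theorem proposition5p12:
  fixes \<gamma> :: real and fs :: "nat \<Rightarrow> int \<Rightarrow> real" and f :: "real \<Rightarrow> real"
  assumes "\<gamma> > 0"
    and "\<forall>N\<ge>1. disc_mem (fs N)"
    and "cont_mem f"
    and "weak_conv (sqrt 2 * \<gamma>) C_sip fs f"
  shows "weak_conv 0 C_rw fs f"
proof -
  define c where "c = sqrt 2 * \<gamma>"
  have c0: "c > 0" using assms(1) unfolding c_def by simp
  have W: "\<forall>gs g. strong_conv c C_sip gs g \<longrightarrow>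
        (\<lambda>N. disc_inner c N (fs N) (gs N)) \<longlonglongrightarrow> cont_inner c f g"
    using assms(4) unfolding weak_conv_def c_def .
  have wc: "(\<lambda>N. disc_inner c N (fs N) (gs N)) \<longlonglongrightarrow> cont_inner c f g"
    if "strong_conv c C_sip gs g" for gs g
    using W[rule_format, OF that] .
  have fmeas: "f \<in> borel_measurable borel" using assms(3) unfolding cont_mem_def by simp
  define hs where "hs = (\<lambda>(N::nat) (k::int). if k = 0 then (1::real) else 0)"
  define h where "h = (\<lambda>x::real. (0::real) + 1 * indicator {0::real} x)"
  have hmeas: "h \<in> borel_measurable borel" unfolding h_def by simp
  have hAE: "AE x in lborel. h x = 0"
    using AE_lborel_singleton[of "0::real"] by eventually_elim (simp add: h_def)
  have "strong_conv c C_sip hs h"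
    unfolding strong_conv_def
  proof (intro conjI allI impI exI[of _ "\<lambda>M. h"])
    show "disc_mem (hs N)" for N
      by (rule finite_supp_disc_mem) (auto simp: hs_def intro: finite_subset[of _ "{0}"])
    show "cont_mem h" unfolding cont_mem_def
    proof
      show "h \<in> borel_measurable borel" by (rule hmeas)
      show "integrable lborel (\<lambda>x. (h x)\<^sup>2)"
        by (rule integrable_cong_AE_imp[OF integrable_zero]) (use hmeas hAE in auto)
    qed
    show "h \<in> C_sip" for M::nat unfolding C_sip_def h_def using zero_Cc
      by (intro CollectI exI[of _ "\<lambda>x::real. 0::real"] exI[of _ "1::real"]) simp
    show "(\<lambda>M. cont_norm c (\<lambda>x. h x - h x)) \<longlonglongrightarrow> 0"
      by (simp add: cont_norm_def cont_inner_def)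
    have ev: "\<forall>\<^sub>F N in sequentially. ereal (disc_norm c N (\<lambda>k. Phi N h k - hs N k)) = 0"
      using eventually_ge_at_top[of "1::nat"]
    proof eventually_elim
      case (elim N)
      then have "(\<lambda>k. Phi N h k - hs N k) = (\<lambda>k. 0)"
        by (auto simp: Phi_def h_def hs_def indicator_def)
      then show ?case by (simp add: disc_norm_def disc_inner_def)
    qed
    have "limsup (\<lambda>N. ereal (disc_norm c N (\<lambda>k. Phi N h k - hs N k))) = 0"
    proof (rule antisym)
      show "limsup (\<lambda>N. ereal (disc_norm c N (\<lambda>k. Phi N h k - hs N k))) \<le> 0"
        by (rule Limsup_bounded) (use ev in \<open>auto elim: eventually_mono\<close>)
      show "0 \<le> limsup (\<lambda>N. ereal (disc_norm c N (\<lambda>k. Phi N h k - hs N k)))"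
        by (rule le_Limsup) (use ev in \<open>auto elim: eventually_mono\<close>)
    qed
    then show "(\<lambda>M. limsup (\<lambda>N. ereal (disc_norm c N (\<lambda>k. Phi N h k - hs N k)))) \<longlonglongrightarrow> 0"
      by simp
  qed
  then have lim1: "(\<lambda>N. disc_inner c N (fs N) (hs N)) \<longlonglongrightarrow> cont_inner c f h" by (rule wc)
  have eq1: "disc_inner c N (fs N) (hs N) = fs N 0 * (1 / real N + c)" for N
  proof -
    have "(\<lambda>k. fs N k * hs N k) = (\<lambda>k. if k = 0 then fs N 0 else 0)"
      by (auto simp: hs_def)
    then have "infsum (\<lambda>k. fs N k * hs N k) UNIV = fs N 0" using single0 by simp
    then show ?thesis by (simp add: disc_inner_def hs_def algebra_simps)
  qed
  have eq2: "cont_inner c f h = f 0 * c"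
  proof -
    have "(LINT x|lborel. f x * h x) = (LINT (x::real)|lborel. (0::real))"
      by (rule integral_cong_AE) (use fmeas hmeas hAE in auto)
    then show ?thesis by (simp add: cont_inner_def h_def)
  qed
  have "(\<lambda>N. fs N 0 * (1 / real N + c)) \<longlonglongrightarrow> f 0 * c" using lim1 eq1 eq2 by simp
  moreover have "(\<lambda>N. 1 / real N + c) \<longlonglongrightarrow> 0 + c"
    by (intro tendsto_add lim_const_over_n tendsto_const)
  ultimately have "(\<lambda>N. fs N 0 * (1 / real N + c) / (1 / real N + c)) \<longlonglongrightarrow> f 0 * c / (0 + c)"
    using c0 by (intro tendsto_divide) auto
  moreover have "fs N 0 * (1 / real N + c) / (1 / real N + c) = fs N 0" for N
  proof -
    have "1 / real N + c > 0" using c0 by (simp add: add_nonneg_pos)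
    then show ?thesis by simp
  qed
  ultimately have F0: "(\<lambda>N. fs N 0) \<longlonglongrightarrow> f 0" using c0 by simp
  show ?thesis unfolding weak_conv_def
  proof (intro allI impI)
    fix gs g assume sc: "strong_conv 0 C_rw gs g"
    then obtain gt where gsm: "\<forall>N\<ge>1. disc_mem (gs N)" and gcm: "cont_mem g"
      and gtC: "\<forall>M. gt M \<in> C_rw"
      and gtc: "(\<lambda>M. cont_norm 0 (\<lambda>x. gt M x - g x)) \<longlonglongrightarrow> 0"
      and gtd: "(\<lambda>M. limsup (\<lambda>N. ereal (disc_norm 0 N (\<lambda>k. Phi N (gt M) k - gs N k)))) \<longlonglongrightarrow> 0"
      unfolding strong_conv_def by blast
    have gmeas: "g \<in> borel_measurable borel" using gcm unfolding cont_mem_def by simp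
    have gtmeas: "gt M \<in> borel_measurable borel" for M using gtC Cc_meas unfolding C_rw_def by blast
    define w where "w = (\<lambda>M N k. Phi N (gt M) k - gs N k)"
    have wmem: "disc_mem (w M N)" if "N \<ge> 1" for M N
      unfolding w_def
      by (rule l2_diff[OF finite_supp_disc_mem[OF Phi_finite_supp]]) (use gtC that gsm in \<open>auto simp: C_rw_def\<close>)
    have wbound: "\<bar>w M N 0\<bar> / sqrt (real N) \<le> disc_norm 0 N (w M N)" if "N \<ge> 1" for M N
    proof -
      have "w M N 0 * w M N 0 \<le> infsum (\<lambda>k. w M N k * w M N k) UNIV"
        using sq_ge_w0(1)[OF wmem[OF that]] by simp
      then have "w M N 0 * w M N 0 / real N \<le> infsum (\<lambda>k. w M N k * w M N k) UNIV / real N"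
        by (simp add: divide_right_mono)
      then have "sqrt (w M N 0 * w M N 0 / real N) \<le> disc_norm 0 N (w M N)"
        by (simp add: disc_norm_def disc_inner_def)
      moreover have "sqrt (w M N 0 * w M N 0 / real N) = \<bar>w M N 0\<bar> / sqrt (real N)"
        by (simp add: real_sqrt_divide real_sqrt_mult_self)
      ultimately show ?thesis by simp
    qed
    have G0: "(\<lambda>N. gs N 0 / real N) \<longlonglongrightarrow> 0"
    proof (rule LIMSEQ_I)
      fix r :: real assume r: "r > 0"
      have "\<forall>\<^sub>F M in sequentially. limsup (\<lambda>N. ereal (disc_norm 0 N (w M N))) < ereal (r/2)"
      proof -
        have "(\<lambda>M. limsup (\<lambda>N. ereal (disc_norm 0 N (w M N)))) \<longlonglongrightarrow> 0"
          using gtd unfolding w_def .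
        moreover have "(0::ereal) < ereal (r/2)" using r by simp
        ultimately show ?thesis by (rule order_tendstoD(2))
      qed
      then obtain M where M: "limsup (\<lambda>N. ereal (disc_norm 0 N (w M N))) < ereal (r/2)"
        by (meson eventually_sequentially le_refl)
      have e1: "\<forall>\<^sub>F N in sequentially. disc_norm 0 N (w M N) < r/2"
        using Limsup_lessD[OF M] by simp
      have e2: "\<forall>\<^sub>F N in sequentially. \<bar>gt M 0 / real N\<bar> < r/2"
      proof -
        have "(\<lambda>N. \<bar>gt M 0 / real N\<bar>) \<longlonglongrightarrow> \<bar>0\<bar>"
          by (intro tendsto_rabs lim_const_over_n)
        then have "(\<lambda>N. \<bar>gt M 0 / real N\<bar>) \<longlonglongrightarrow> 0" by simp
        moreover have "(0::real) < r/2" using r by simp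
        ultimately show ?thesis by (rule order_tendstoD(2))
      qed
      have "\<forall>\<^sub>F N in sequentially. \<bar>gs N 0 / real N\<bar> < r"
        using e1 e2 eventually_ge_at_top[of "1::nat"]
      proof eventually_elim
        case (elim N)
        have N1: "real N \<ge> 1" using elim(3) by simp
        have s1: "sqrt (real N) \<ge> 1" using N1 by simp
        then have "sqrt (real N) * 1 \<le> sqrt (real N) * sqrt (real N)"
          by (intro mult_left_mono) auto
        then have sq: "sqrt (real N) \<le> real N" by simp
        have sqp: "sqrt (real N) > 0" using N1 by simp
        have "\<bar>w M N 0\<bar> / real N \<le> \<bar>w M N 0\<bar> / sqrt (real N)"
          using sq sqp by (simp add: frac_le)
        also have "\<dots> < r/2" using wbound[OF elim(3), of M] elim(1) by linarith
        finally have a: "\<bar>w M N 0\<bar> / real N < r/2" .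
        have "gs N 0 / real N = gt M 0 / real N - w M N 0 / real N"
          using elim(3) by (simp add: w_def Phi_def diff_divide_distrib)
        then have "\<bar>gs N 0 / real N\<bar> \<le> \<bar>gt M 0 / real N\<bar> + \<bar>w M N 0 / real N\<bar>"
          by (simp only: abs_triangle_ineq4)
        moreover have "\<bar>w M N 0 / real N\<bar> = \<bar>w M N 0\<bar> / real N" by (simp add: abs_divide)
        ultimately show ?case using a elim(2) by linarith
      qed
      then show "\<exists>no. \<forall>n\<ge>no. norm (gs n 0 / real n - 0) < r"
        by (simp add: eventually_sequentially)
    qed
    define g' where "g' = (\<lambda>x. g x - g 0 * indicator {0::real} x)"
    define gs' where "gs' = (\<lambda>N (k::int). if k = 0 then 0 else gs N k)"
    define gt' where "gt' = (\<lambda>M x. gt M x + (- gt M 0) * indicator {0::real} x)"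
    have g'meas: "g' \<in> borel_measurable borel" unfolding g'_def using gmeas by simp
    have g'AE: "AE x in lborel. g' x = g x"
      using AE_lborel_singleton[of "0::real"] by eventually_elim (simp add: g'_def)
    have g'0: "g' 0 = 0" by (simp add: g'_def)
    have "strong_conv c C_sip gs' g'"
      unfolding strong_conv_def
    proof (intro conjI allI impI exI[of _ gt'])
      show "disc_mem (gs' N)" if "N \<ge> 1" for N
        unfolding disc_mem_def
        by (rule summable_on_comparison_test[of "\<lambda>k. (gs N k)\<^sup>2"])
           (use gsm that in \<open>auto simp: disc_mem_def gs'_def\<close>)
      show "cont_mem g'" unfolding cont_mem_def
      proof
        show "g' \<in> borel_measurable borel" by (rule g'meas)
        show "integrable lborel (\<lambda>x. (g' x)\<^sup>2)"
          by (rule integrable_cong_AE_imp[of _ "\<lambda>x. (g x)\<^sup>2"])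
             (use gcm g'meas g'AE in \<open>auto simp: cont_mem_def elim: eventually_mono\<close>)
      qed
      show "gt' M \<in> C_sip" for M
        unfolding C_sip_def gt'_def using gtC unfolding C_rw_def
        by (intro CollectI exI[of _ "gt M"] exI[of _ "- gt M 0"]) simp
      have "cont_norm c (\<lambda>x. gt' M x - g' x) = cont_norm 0 (\<lambda>x. gt M x - g x)" for M
      proof -
        have "(LINT x|lborel. (gt' M x - g' x) * (gt' M x - g' x)) = (LINT x|lborel. (gt M x - g x) * (gt M x - g x))"
        proof (rule integral_cong_AE)
          show "(\<lambda>x. (gt' M x - g' x) * (gt' M x - g' x)) \<in> borel_measurable lborel"
            unfolding gt'_def using gtmeas[of M] g'meas by simp
          show "(\<lambda>x. (gt M x - g x) * (gt M x - g x)) \<in> borel_measurable lborel"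
            using gtmeas[of M] gmeas by simp
          show "AE x in lborel. (gt' M x - g' x) * (gt' M x - g' x) = (gt M x - g x) * (gt M x - g x)"
            using AE_lborel_singleton[of "0::real"] by eventually_elim (simp add: g'_def gt'_def)
        qed
        moreover have "gt' M 0 - g' 0 = 0" by (simp add: gt'_def g'0)
        ultimately show ?thesis by (simp add: cont_norm_def cont_inner_def)
      qed
      then show "(\<lambda>M. cont_norm c (\<lambda>x. gt' M x - g' x)) \<longlonglongrightarrow> 0" using gtc by simp
      show "(\<lambda>M. limsup (\<lambda>N. ereal (disc_norm c N (\<lambda>k. Phi N (gt' M) k - gs' N k)))) \<longlonglongrightarrow> 0"
      proof (rule tendsto_sandwich[OF _ _ tendsto_const gtd])
        show "\<forall>\<^sub>F M in sequentially. 0 \<le> limsup (\<lambda>N. ereal (disc_norm c N (\<lambda>k. Phi N (gt' M) k - gs' N k)))"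
          using c0 by (intro always_eventually allI le_Limsup) (auto intro: disc_norm_nonneg)
        show "\<forall>\<^sub>F M in sequentially. limsup (\<lambda>N. ereal (disc_norm c N (\<lambda>k. Phi N (gt' M) k - gs' N k)))
              \<le> limsup (\<lambda>N. ereal (disc_norm 0 N (\<lambda>k. Phi N (gt M) k - gs N k)))"
        proof (intro always_eventually allI, rule Limsup_mono)
          fix M
          show "\<forall>\<^sub>F N in sequentially. ereal (disc_norm c N (\<lambda>k. Phi N (gt' M) k - gs' N k))
              \<le> ereal (disc_norm 0 N (\<lambda>k. Phi N (gt M) k - gs N k))"
            using eventually_ge_at_top[of "1::nat"]
          proof eventually_elim
            case (elim N)
            have v: "(\<lambda>k. Phi N (gt' M) k - gs' N k) = (\<lambda>k. if k = 0 then 0 else w M N k)"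
              using elim by (auto simp: Phi_def gt'_def gs'_def w_def indicator_def)
            have "(\<lambda>k. (if k = 0 then 0 else w M N k) * (if k = 0 then 0 else w M N k))
                = (\<lambda>k. if k = 0 then 0 else w M N k * w M N k)" by auto
            then have "disc_norm c N (\<lambda>k. Phi N (gt' M) k - gs' N k)
                = sqrt ((infsum (\<lambda>k. w M N k * w M N k) UNIV - w M N 0 * w M N 0) / real N)"
              unfolding v disc_norm_def disc_inner_def using sq_ge_w0(2)[OF wmem[OF elim]] by simp
            also have "\<dots> \<le> sqrt (infsum (\<lambda>k. w M N k * w M N k) UNIV / real N)"
              by (intro real_sqrt_le_mono divide_right_mono) auto
            also have "\<dots> = disc_norm 0 N (\<lambda>k. Phi N (gt M) k - gs N k)"
              by (simp add: disc_norm_def disc_inner_def w_def)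
            finally show ?case by simp
          qed
        qed
      qed
    qed
    then have lim2: "(\<lambda>N. disc_inner c N (fs N) (gs' N)) \<longlonglongrightarrow> cont_inner c f g'" by (rule wc)
    have ci: "cont_inner c f g' = cont_inner 0 f g"
    proof -
      have "(LINT x|lborel. f x * g' x) = (LINT x|lborel. f x * g x)"
        by (rule integral_cong_AE) (use fmeas gmeas g'meas g'AE in \<open>auto elim: eventually_mono\<close>)
      then show ?thesis by (simp add: cont_inner_def g'0)
    qed
    have "(\<lambda>N. disc_inner c N (fs N) (gs' N) + fs N 0 * (gs N 0 / real N)) \<longlonglongrightarrow> cont_inner 0 f g + f 0 * 0"
      using lim2 ci F0 G0 by (intro tendsto_add tendsto_mult) auto
    then have lim3: "(\<lambda>N. disc_inner c N (fs N) (gs' N) + fs N 0 * (gs N 0 / real N)) \<longlonglongrightarrow> cont_inner 0 f g"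
      by simp
    show "(\<lambda>N. disc_inner 0 N (fs N) (gs N)) \<longlonglongrightarrow> cont_inner 0 f g"
    proof (rule Lim_transform_eventually[OF lim3])
      show "\<forall>\<^sub>F N in sequentially. disc_inner c N (fs N) (gs' N) + fs N 0 * (gs N 0 / real N) = disc_inner 0 N (fs N) (gs N)"
        using eventually_ge_at_top[of "1::nat"]
      proof eventually_elim
        case (elim N)
        have s: "(\<lambda>k. fs N k * gs N k) summable_on UNIV"
          using l2_prod_summable assms(2) gsm elim by blast
        have "(\<lambda>k. fs N k * gs' N k) = (\<lambda>k. if k = 0 then 0 else fs N k * gs N k)"
          by (auto simp: gs'_def)
        then have "infsum (\<lambda>k. fs N k * gs' N k) UNIV = infsum (\<lambda>k. fs N k * gs N k) UNIV - fs N 0 * gs N 0"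
          using infsum_drop0[OF s] by simp
        then show ?case by (simp add: disc_inner_def gs'_def diff_divide_distrib)
      qed
    qed
  qed
qed

end
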